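(* Assume (A4) and (A5) of the context. Then for every $\beta>1/2$, $$\sup_{y\in\mathbb{R}}\big|\widehat f_n(y)-\mathbb{E}(\widehat f_n(y))\big|=O\big((\log n)^\beta\,2^{j_n}n^{-1/2}\big)\quad\text{almost surely.}$$
   Context: $Y$ is a real random variable with density $f\in L^2(\mathbb{R})$, and $Y_1,\dots,Y_n$ are i.i.d. copies of $Y$. $\varphi$ is a father wavelet and $\psi$ the associated mother wavelet, so that $\{\varphi_k=\varphi(\cdot-k),\ \psi_{\ell k}=2^{\ell/2}\psi(2^\ell\cdot-k):k\in\mathbb{Z},\ell\in\mathbb{N}\}$ is an orthonormal basis of $L^2(\mathbb{R})$, and $K(x,y)=\sum_{k\in\mathbb{Z}}\varphi(x-k)\varphi(y-k)$. $(j_n)$ is an increasing integer sequence tending to $+\infty$, and $\widehat f_n(y)=\sum_k\big(\frac1n\sum_{i=1}^n\varphi_k(Y_i)\big)\varphi_k(y)+\sum_{\ell=0}^{j_n}\sum_k\big(\frac1n\sum_{i=1}^n\psi_{\ell k}(Y_i)\big)\psi_{\ell k}(y)$. (A4): $\varphi$ and $\psi$ are bounded and compactly supported. (A5): $|K(x,y)|\le\Phi(x-y)$ where $\Phi:\mathbb{R}\to\mathbb{R}_+$ is bounded, compactly supported and symmetric with $\int u^2\Phi^2(u)du<\infty$ and $\int|u|^k\Phi(u)du<\infty$ for $k\in\{0,1,4\}$; and $\int K(x,y)(y-x)^kdy=0$ for all $x\in\mathbb{R}$, $k\in\{1,2,3\}$. *)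

theory Defs
  imports "HOL-Probability.Probability"
begin

definition wphi :: "(real \<Rightarrow> real) \<Rightarrow> int \<Rightarrow> real \<Rightarrow> real" where
  "wphi \<phi> k x = \<phi> (x - real_of_int k)"

definition wpsi :: "(real \<Rightarrow> real) \<Rightarrow> nat \<Rightarrow> int \<Rightarrow> real \<Rightarrow> real" where
  "wpsi \<psi> l k x = 2 powr (real l / 2) * \<psi> (2 ^ l * x - real_of_int k)"

definition wfam :: "(real \<Rightarrow> real) \<Rightarrow> (real \<Rightarrow> real) \<Rightarrow> nat option \<times> int \<Rightarrow> real \<Rightarrow> real" where
  "wfam \<phi> \<psi> a = (case a of (None, k) \<Rightarrow> wphi \<phi> k | (Some l, k) \<Rightarrow> wpsi \<psi> l k)"

definition L2_orthonormal_basis :: "('i \<Rightarrow> real \<Rightarrow> real) \<Rightarrow> bool" where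
  "L2_orthonormal_basis e \<longleftrightarrow>
     (\<forall>a. e a \<in> borel_measurable borel \<and> integrable lborel (\<lambda>x. (e a x)\<^sup>2)) \<and>
     (\<forall>a b. integrable lborel (\<lambda>x. e a x * e b x) \<and>
            (LINT x|lborel. e a x * e b x) = (if a = b then 1 else 0)) \<and>
     (\<forall>g. g \<in> borel_measurable borel \<and> integrable lborel (\<lambda>x. (g x)\<^sup>2) \<and>
          (\<forall>a. (LINT x|lborel. g x * e a x) = 0) \<longrightarrow> (AE x in lborel. g x = 0))"

definition wkernel :: "(real \<Rightarrow> real) \<Rightarrow> real \<Rightarrow> real \<Rightarrow> real" where
  "wkernel \<phi> x y = (\<Sum>\<^sub>\<infinity>k::int. \<phi> (x - real_of_int k) * \<phi> (y - real_of_int k))"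

definition wavelet_est ::
  "(real \<Rightarrow> real) \<Rightarrow> (real \<Rightarrow> real) \<Rightarrow> int \<Rightarrow> nat \<Rightarrow> (nat \<Rightarrow> real) \<Rightarrow> real \<Rightarrow> real" where
  "wavelet_est \<phi> \<psi> J n Ys y =
     (\<Sum>\<^sub>\<infinity>k::int. (1 / real n * (\<Sum>i\<in>{1..n}. wphi \<phi> k (Ys i))) * wphi \<phi> k y) +
     (\<Sum>l\<in>{l::nat. int l \<le> J}. \<Sum>\<^sub>\<infinity>k::int.
        (1 / real n * (\<Sum>i\<in>{1..n}. wpsi \<psi> l k (Ys i))) * wpsi \<psi> l k y)"

end

theory Submission
  imports Defs
begin


definition Qd :: "(real \<Rightarrow> real) \<Rightarrow> real measure" where
  "Qd f = density lborel (\<lambda>x. ennreal (f x))"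

definition Iv :: "real \<Rightarrow> nat \<Rightarrow> int \<Rightarrow> real set" where
  "Iv c R k = {x. \<bar>c * x - real_of_int k\<bar> \<le> real R}"

lemma Iv_eq: "c > 0 \<Longrightarrow> Iv c R k = {(real_of_int k - real R) / c .. (real_of_int k + real R) / c}"
  unfolding Iv_def by (auto simp: abs_le_iff field_simps)

lemma Iv_meas[measurable]: "Iv c R k \<in> sets borel"
  unfolding Iv_def by measurable

definition Wn :: "real \<Rightarrow> nat \<Rightarrow> int set" where
  "Wn t R = {\<lfloor>t\<rfloor> - int R .. \<lfloor>t\<rfloor> + int R}"

lemma Wn_mem: "\<bar>t - real_of_int k\<bar> \<le> real R \<Longrightarrow> k \<in> Wn t R"
  unfolding Wn_def by (auto simp: abs_le_iff) linarith+

lemma Wn_card: "card (Wn t R) = 2 * R + 1"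
  unfolding Wn_def by simp

lemma Wn_fin[simp]: "finite (Wn t R)"
  unfolding Wn_def by simp

lemma infsum_Wn:
  assumes "\<And>k. k \<notin> W \<Longrightarrow> G k = 0" "finite W"
  shows "(\<Sum>\<^sub>\<infinity>k::int. G k) = (\<Sum>k\<in>W. (G k :: real))"
proof -
  have "infsum G UNIV = infsum G W"
    by (rule infsum_cong_neutral) (use assms in auto)
  then show ?thesis using infsum_finite[OF assms(2)] by simp
qed

lemma est_decomp:
  assumes phis: "\<And>x. \<phi> x \<noteq> 0 \<Longrightarrow> \<bar>x\<bar> \<le> real R" and psis: "\<And>x. \<psi> x \<noteq> 0 \<Longrightarrow> \<bar>x\<bar> \<le> real R"
  shows "wavelet_est \<phi> \<psi> J n Ys y =
    (\<Sum>k\<in>Wn y R. (1 / real n * (\<Sum>i\<in>{1..n}. wphi \<phi> k (Ys i))) * wphi \<phi> k y) +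
    (\<Sum>l\<in>{l::nat. int l \<le> J}. \<Sum>k\<in>Wn (2^l * y) R.
        (1 / real n * (\<Sum>i\<in>{1..n}. wpsi \<psi> l k (Ys i))) * wpsi \<psi> l k y)"
proof -
  have 1: "(\<Sum>\<^sub>\<infinity>k::int. (1 / real n * (\<Sum>i\<in>{1..n}. wphi \<phi> k (Ys i))) * wphi \<phi> k y)
     = (\<Sum>k\<in>Wn y R. (1 / real n * (\<Sum>i\<in>{1..n}. wphi \<phi> k (Ys i))) * wphi \<phi> k y)"
  proof (rule infsum_Wn)
    fix k assume "k \<notin> Wn y R"
    then have "\<not> \<bar>y - real_of_int k\<bar> \<le> real R" using Wn_mem by blast
    then have "\<phi> (y - real_of_int k) = 0" using phis by blast
    then show "(1 / real n * (\<Sum>i\<in>{1..n}. wphi \<phi> k (Ys i))) * wphi \<phi> k y = 0"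
      by (simp add: wphi_def)
  qed simp
  have 2: "(\<Sum>\<^sub>\<infinity>k::int. (1 / real n * (\<Sum>i\<in>{1..n}. wpsi \<psi> l k (Ys i))) * wpsi \<psi> l k y)
     = (\<Sum>k\<in>Wn (2^l * y) R. (1 / real n * (\<Sum>i\<in>{1..n}. wpsi \<psi> l k (Ys i))) * wpsi \<psi> l k y)" for l
  proof (rule infsum_Wn)
    fix k assume "k \<notin> Wn (2^l * y) R"
    then have "\<not> \<bar>2^l * y - real_of_int k\<bar> \<le> real R" using Wn_mem by blast
    then have "\<psi> (2^l * y - real_of_int k) = 0" using psis by blast
    then show "(1 / real n * (\<Sum>i\<in>{1..n}. wpsi \<psi> l k (Ys i))) * wpsi \<psi> l k y = 0"
      by (simp add: wpsi_def)
  qed simp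
  show ?thesis unfolding wavelet_est_def 1 2 ..
qed

lemma sum_pow2: "(\<Sum>l\<le>N. (2::real)^l) = 2^(Suc N) - 1"
  by (induction N) auto

lemma sum_geo_aux: "(\<Sum>l\<le>N. (2::real)^l * (1 + real (N - l))) + real N + 3 = 2^(N+2)"
proof (induction N)
  case 0 then show ?case by simp
next
  case (Suc N)
  have "(\<Sum>l\<le>Suc N. (2::real)^l * (1 + real (Suc N - l)))
      = (\<Sum>l\<le>N. (2::real)^l * (1 + real (Suc N - l))) + 2^(Suc N)" by simp
  also have "(\<Sum>l\<le>N. (2::real)^l * (1 + real (Suc N - l))) = (\<Sum>l\<le>N. (2::real)^l * (1 + real (N - l)) + 2^l)"
    by (intro sum.cong refl) (auto simp: Suc_diff_le algebra_simps)
  also have "\<dots> = (\<Sum>l\<le>N. (2::real)^l * (1 + real (N - l))) + (2^(Suc N) - 1)"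
    by (simp add: sum.distrib sum_pow2)
  finally show ?case using Suc.IH by simp
qed

lemma sum_geo: "(\<Sum>l\<le>N. (2::real)^l * (1 + real (N - l))) \<le> 4 * 2^N"
  using sum_geo_aux[of N] by simp

lemma sum_half: "(\<Sum>l\<le>N. (1/2::real)^(N - l)) \<le> 2"
proof -
  have "(\<Sum>l\<le>N. (1/2::real)^(N - l)) = (\<Sum>l\<le>N. (2::real)^l / 2^N)"
    by (intro sum.cong refl) (simp add: power_diff power_divide)
  also have "\<dots> = (2^(Suc N) - 1) / 2^N" by (simp add: sum_divide_distrib[symmetric] sum_pow2)
  also have "\<dots> \<le> 2" by (simp add: field_simps)
  finally show ?thesis .
qed

locale wv_ctx = prob_space M for M :: "'a measure" +
  fixes Y :: "nat \<Rightarrow> 'a \<Rightarrow> real" and f :: "real \<Rightarrow> real"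
  assumes indep: "indep_vars (\<lambda>_. borel) Y UNIV"
    and dens: "\<And>i. distributed M lborel (Y i) (\<lambda>x. ennreal (f x))"
begin

lemma Y_meas[measurable]: "Y i \<in> borel_measurable M"
  using distributed_measurable[OF dens[of i]] by simp

lemma distr_Y: "distr M borel (Y i) = Qd f"
proof -
  have "distr M lborel (Y i) = Qd f"
    using distributed_distr_eq_density[OF dens[of i]] by (simp add: Qd_def)
  moreover have "distr M lborel (Y i) = distr M borel (Y i)"
    by (rule distr_cong) auto
  ultimately show ?thesis by simp
qed

lemma Q_real_distr: "real_distribution (Qd f)"
  using real_distribution_distr[OF Y_meas[of 0]] distr_Y[of 0] by simp

lemma sets_Q[simp]: "sets (Qd f) = sets borel"
  by (simp add: Qd_def)

lemma space_Q[simp]: "space (Qd f) = UNIV"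
  by (simp add: Qd_def)

lemma prob_Y: "A \<in> sets borel \<Longrightarrow> prob {\<omega>\<in>space M. Y i \<omega> \<in> A} = measure (Qd f) A"
proof -
  assume A: "A \<in> sets borel"
  have "measure (distr M borel (Y i)) A = measure M (Y i -` A \<inter> space M)"
    using A by (intro measure_distr) auto
  moreover have "Y i -` A \<inter> space M = {\<omega>\<in>space M. Y i \<omega> \<in> A}" by auto
  ultimately show ?thesis using distr_Y by simp
qed

lemma exp_Y: "(g::real\<Rightarrow>real) \<in> borel_measurable borel \<Longrightarrow> expectation (\<lambda>\<omega>. g (Y i \<omega>)) = integral\<^sup>L (Qd f) g"
  using integral_distr[of "Y i" M borel g] distr_Y[of i] by simp

lemma f_meas[measurable]: "(\<lambda>x. ennreal (f x)) \<in> borel_measurable borel"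
  using distributed_borel_measurable[OF dens[of 0]] by simp


lemma cdf_cont: "isCont (cdf (Qd f)) x"
proof -
  interpret Q: real_distribution "Qd f" by (rule Q_real_distr)
  have "emeasure (Qd f) {x} = 0"
    unfolding Qd_def by (subst emeasure_density) (auto intro!: nn_integral_null_set simp: null_sets_def)
  then have "measure (Qd f) {x} = 0" by (simp add: measure_def)
  then show ?thesis using Q.isCont_cdf by simp
qed

lemma indep_sub: "indep_vars (\<lambda>_. borel) (\<lambda>i \<omega>. g (Y i \<omega>)) I" if "g \<in> borel_measurable borel"
  using indep_vars_compose2[OF indep_vars_subset[OF indep subset_UNIV, of I], of "\<lambda>_. g" "\<lambda>_. borel"] that
  by blast

lemma hoeff_abs:
  assumes g: "g \<in> borel_measurable borel" and bd: "\<And>x. \<bar>g x\<bar> \<le> B" and B: "B > 0"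
    and n: "n > 0" and e: "\<epsilon> \<ge> 0"
  shows "prob {\<omega>\<in>space M. \<bar>(\<Sum>i\<in>{1..n}. g (Y i \<omega>)) - (\<Sum>i\<in>{1..n}. expectation (\<lambda>\<omega>. g (Y i \<omega>)))\<bar> \<ge> \<epsilon>}
     \<le> 2 * exp (-2 * \<epsilon>\<^sup>2 / (real n * (2*B)\<^sup>2))"
proof -
  interpret H: Hoeffding_ineq M "{1..n}" "\<lambda>i \<omega>. g (Y i \<omega>)" "\<lambda>_. -B" "\<lambda>_. B"
    "\<Sum>i\<in>{1..n}. expectation (\<lambda>\<omega>. g (Y i \<omega>))"
  proof unfold_locales
    show "indep_vars (\<lambda>_. borel) (\<lambda>i \<omega>. g (Y i \<omega>)) {1..n}" using indep_sub[OF g] .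
    fix i show "AE x in M. g (Y i x) \<in> {- B..B}" 
    proof (intro AE_I2)
      fix x have "\<bar>g (Y i x)\<bar> \<le> B" by (rule bd)
      thus "g (Y i x) \<in> {-B..B}" by (simp add: abs_le_iff)
    qed
  qed simp
  have s: "(\<Sum>i\<in>{1..n}. (B - - B)\<^sup>2) = real n * (2*B)\<^sup>2" by simp
  have "(\<Sum>i\<in>{1..n}. (B - - B)\<^sup>2) > 0" using B n by (simp)
  from H.Hoeffding_ineq_abs_ge[OF e this] show ?thesis unfolding s .
qed

lemma hoeff_ge:
  assumes g: "g \<in> borel_measurable borel" and bd: "\<And>x. g x \<in> {0..1}"
    and n: "n > 0" and e: "\<epsilon> \<ge> 0"
  shows "prob {\<omega>\<in>space M. (\<Sum>i\<in>{1..n}. g (Y i \<omega>)) \<ge> (\<Sum>i\<in>{1..n}. expectation (\<lambda>\<omega>. g (Y i \<omega>))) + \<epsilon>}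
     \<le> exp (-2 * \<epsilon>\<^sup>2 / real n)"
proof -
  interpret H: Hoeffding_ineq M "{1..n}" "\<lambda>i \<omega>. g (Y i \<omega>)" "\<lambda>_. 0" "\<lambda>_. 1"
    "\<Sum>i\<in>{1..n}. expectation (\<lambda>\<omega>. g (Y i \<omega>))"
  proof unfold_locales
    show "indep_vars (\<lambda>_. borel) (\<lambda>i \<omega>. g (Y i \<omega>)) {1..n}" using indep_sub[OF g] .
    fix i show "AE x in M. g (Y i x) \<in> {0..1}" by (intro AE_I2) (rule bd)
  qed simp
  have s: "(\<Sum>i\<in>{1..n}. (1 - 0::real)\<^sup>2) = real n" by simp
  have "(\<Sum>i\<in>{1..n}. (1 - 0::real)\<^sup>2) > 0" using n by (simp)
  from H.Hoeffding_ineq_ge[OF e this] show ?thesis unfolding s .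
qed


sublocale Q: real_distribution "Qd f" by (rule Q_real_distr)

lemma F_mono: "x \<le> y \<Longrightarrow> cdf (Qd f) x \<le> cdf (Qd f) y"
  by (rule Q.cdf_nondecreasing)

lemma F_meas[measurable]: "cdf (Qd f) \<in> borel_measurable borel"
  by (rule borel_measurable_mono) (auto simp: mono_def F_mono)

lemma F_ivt: assumes "0 < c" "c < 1" shows "\<exists>t. cdf (Qd f) t = c"
proof -
  have "eventually (\<lambda>x. cdf (Qd f) x < c) at_bot"
    using Q.cdf_lim_at_bot assms(1) by (rule order_tendstoD)
  then obtain a where a: "cdf (Qd f) a < c" by (auto simp: eventually_at_bot_linorder)
  have "eventually (\<lambda>x. cdf (Qd f) x > c) at_top"
    using Q.cdf_lim_at_top_prob assms(2) by (rule order_tendstoD)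
  then obtain b where b: "cdf (Qd f) b > c" by (auto simp: eventually_at_top_linorder)
  have ab: "a \<le> b"
  proof (rule ccontr)
    assume "\<not> a \<le> b" then have "cdf (Qd f) b \<le> cdf (Qd f) a" by (intro F_mono) auto
    with a b show False by simp
  qed
  have "continuous_on {a..b} (cdf (Qd f))"
    using cdf_cont by (intro continuous_at_imp_continuous_on) auto
  from IVT'[of "cdf (Qd f)" a c b, OF _ _ ab this] a b show ?thesis by auto
qed

lemma F_lt: assumes "0 \<le> b" shows "measure (Qd f) {x. cdf (Qd f) x < b} \<le> b"
proof (cases "b < 1")
  case False then show ?thesis using Q.prob_le_1[of "{x. cdf (Qd f) x < b}"] by linarith
next
  case True
  show ?thesis
  proof (cases "b = 0")
    case True
    then have "{x. cdf (Qd f) x < b} = {}" using Q.cdf_nonneg by (auto simp: not_less)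
    then show ?thesis using True by simp
  next
    case False
    with assms have "0 < b" by simp
    from F_ivt[OF this \<open>b < 1\<close>] obtain t where t: "cdf (Qd f) t = b" by blast
    have "{x. cdf (Qd f) x < b} \<subseteq> {..t}"
    proof
      fix x assume "x \<in> {x. cdf (Qd f) x < b}"
      then have "cdf (Qd f) x < cdf (Qd f) t" using t by simp
      then show "x \<in> {..t}" using F_mono[of t x] by (cases "x \<le> t") auto
    qed
    then have "measure (Qd f) {x. cdf (Qd f) x < b} \<le> measure (Qd f) {..t}"
      by (intro Q.finite_measure_mono) auto
    also have "\<dots> = b" using t by (simp add: cdf_def2)
    finally show ?thesis .
  qed
qed

lemma F_le: assumes "a \<le> 1" shows "a \<le> measure (Qd f) {x. cdf (Qd f) x \<le> a}"
proof (cases "0 < a")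
  case False then show ?thesis using measure_nonneg[of "Qd f" "{x. cdf (Qd f) x \<le> a}"] by linarith
next
  case True
  show ?thesis
  proof (cases "a = 1")
    case True
    then have "{x. cdf (Qd f) x \<le> a} = UNIV" using Q.cdf_bounded_prob by auto
    then show ?thesis using True Q.prob_space by simp
  next
    case False
    with assms have "a < 1" by simp
    from F_ivt[OF \<open>0 < a\<close> this] obtain t where t: "cdf (Qd f) t = a" by blast
    have "{..t} \<subseteq> {x. cdf (Qd f) x \<le> a}" using t F_mono by auto
    then have "measure (Qd f) {..t} \<le> measure (Qd f) {x. cdf (Qd f) x \<le> a}"
      by (intro Q.finite_measure_mono) auto
    moreover have "measure (Qd f) {..t} = a" using t by (simp add: cdf_def2)
    ultimately show ?thesis by simp
  qed
qed

lemma F_block: assumes "a < b" "0 \<le> b" "a \<le> 1"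
  shows "measure (Qd f) {x. a < cdf (Qd f) x \<and> cdf (Qd f) x < b} \<le> b - a"
proof -
  have eq: "{x. a < cdf (Qd f) x \<and> cdf (Qd f) x < b} = {x. cdf (Qd f) x < b} - {x. cdf (Qd f) x \<le> a}"
    by auto
  have sub: "{x. cdf (Qd f) x \<le> a} \<subseteq> {x. cdf (Qd f) x < b}" using assms by auto
  have "measure (Qd f) ({x. cdf (Qd f) x < b} - {x. cdf (Qd f) x \<le> a})
      = measure (Qd f) {x. cdf (Qd f) x < b} - measure (Qd f) {x. cdf (Qd f) x \<le> a}"
    using sub by (intro Q.finite_measure_Diff) auto
  then show ?thesis using eq F_lt[OF assms(2)] F_le[OF assms(3)] by simp
qed

lemma F_diff: assumes "u \<le> v" shows "cdf (Qd f) v - cdf (Qd f) u \<le> measure (Qd f) {u..v}"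
proof (cases "u = v")
  case True then show ?thesis by simp
next
  case False
  then have "cdf (Qd f) v - cdf (Qd f) u = measure (Qd f) {u<..v}"
    using assms by (intro Q.cdf_diff_eq) simp
  also have "\<dots> \<le> measure (Qd f) {u..v}" by (intro Q.finite_measure_mono) auto
  finally show ?thesis .
qed


definition emp :: "nat \<Rightarrow> (real \<Rightarrow> real) \<Rightarrow> 'a \<Rightarrow> real" where
  "emp n g \<omega> = (\<Sum>i\<in>{1..n}. g (Y i \<omega>))"

definition mu :: "nat \<Rightarrow> (real \<Rightarrow> real) \<Rightarrow> real" where
  "mu n g = (\<Sum>i\<in>{1..n}. expectation (\<lambda>\<omega>. g (Y i \<omega>)))"

lemma mu_eq: "g \<in> borel_measurable borel \<Longrightarrow> mu n g = real n * integral\<^sup>L (Qd f) g"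
  by (simp add: mu_def exp_Y)

lemma emp_meas[measurable]: assumes [measurable]: "g \<in> borel_measurable borel" shows "emp n g \<in> borel_measurable M"
  unfolding emp_def by measurable

definition blk :: "nat \<Rightarrow> nat \<Rightarrow> real set" where
  "blk K r = {x. (real r - 1) / real K < cdf (Qd f) x \<and> cdf (Qd f) x < (real r + 2) / real K}"

lemma blk_meas[measurable]: "blk K r \<in> sets borel"
  unfolding blk_def by measurable

definition BlockBad :: "nat \<Rightarrow> nat \<Rightarrow> real \<Rightarrow> 'a set" where
  "BlockBad n K s = (\<Union>r\<in>{0..K}. {\<omega>\<in>space M. emp n (indicator (blk K r)) \<omega> \<ge> mu n (indicator (blk K r)) + real n * s / 2})"

lemma BlockBad_meas: "BlockBad n K s \<in> sets M"
  unfolding BlockBad_def by measurable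

lemma BlockBad_prob: assumes "n > 0" "s \<ge> 0"
  shows "prob (BlockBad n K s) \<le> real (K + 1) * exp (- real n * s\<^sup>2 / 2)"
proof -
  have "prob (BlockBad n K s) \<le> (\<Sum>r\<in>{0..K}. prob {\<omega>\<in>space M. emp n (indicator (blk K r)) \<omega> \<ge> mu n (indicator (blk K r)) + real n * s / 2})"
    unfolding BlockBad_def by (intro measure_UNION_le) auto
  also have "\<dots> \<le> (\<Sum>r\<in>{0..K}. exp (- real n * s\<^sup>2 / 2))"
  proof (intro sum_mono)
    fix r
    have "prob {\<omega>\<in>space M. emp n (indicator (blk K r)) \<omega> \<ge> mu n (indicator (blk K r)) + real n * s / 2}
       \<le> exp (-2 * (real n * s / 2)\<^sup>2 / real n)"
      unfolding emp_def mu_def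
      by (rule hoeff_ge) (use assms in \<open>auto simp: indicator_def\<close>)
    also have "-2 * (real n * s / 2)\<^sup>2 / real n = - real n * s\<^sup>2 / 2"
      using assms by (simp add: power2_eq_square field_simps)
    finally show "prob {\<omega>\<in>space M. emp n (indicator (blk K r)) \<omega> \<ge> mu n (indicator (blk K r)) + real n * s / 2}
       \<le> exp (- real n * s\<^sup>2 / 2)" .
  qed
  also have "\<dots> = real (K + 1) * exp (- real n * s\<^sup>2 / 2)" by simp
  finally show ?thesis .
qed

lemma blk_prob: assumes "K > 0" "r \<le> K" shows "measure (Qd f) (blk K r) \<le> 3 / real K"
proof -
  have "measure (Qd f) (blk K r) \<le> (real r + 2) / real K - (real r - 1) / real K"
    unfolding blk_def using assms by (intro F_block) (auto simp: field_simps)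
  also have "\<dots> = 3 / real K" using assms by (simp add: divide_simps)
  finally show ?thesis .
qed


lemma integrable_Q: "(g::real\<Rightarrow>real) \<in> borel_measurable borel \<Longrightarrow> (\<And>x. \<bar>g x\<bar> \<le> A) \<Longrightarrow> integrable (Qd f) g"
  by (intro Q.integrable_const_bound[where B=A]) auto

lemma light:
  assumes g: "g \<in> borel_measurable borel" and gb: "\<And>x. \<bar>g x\<bar> \<le> A"
    and gs: "\<And>x. g x \<noteq> 0 \<Longrightarrow> x \<in> {u..v}"
    and uv: "u \<le> v" and lt: "measure (Qd f) {u..v} < 1 / real K" and K: "K > 0" and n: "n > 0"
    and om: "\<omega> \<in> space M" "\<omega> \<notin> BlockBad n K s"
  shows "\<bar>emp n g \<omega> - mu n g\<bar> \<le> real n * A * (4 / real K + s / 2)"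
proof -
  let ?F = "cdf (Qd f)"
  define r where "r = nat \<lfloor>real K * ?F u\<rfloor>"
  have Fu: "0 \<le> ?F u" "?F u \<le> 1" using Q.cdf_nonneg Q.cdf_bounded_prob by auto
  have Kp: "real K > 0" using K by simp
  have KF: "0 \<le> real K * ?F u" using Fu by simp
  have r1: "real r \<le> real K * ?F u" "real K * ?F u < real r + 1"
    unfolding r_def using KF by linarith+
  have rK: "r \<le> K"
  proof -
    have "real K * ?F u \<le> real K" using Fu Kp by (simp add: mult_left_le)
    then have "real r \<le> real K" using r1 by linarith
    then show ?thesis by simp
  qed
  have sub: "{u..v} \<subseteq> blk K r"
  proof
    fix x assume x: "x \<in> {u..v}"
    have "?F u \<le> ?F x" "?F x \<le> ?F v" using x F_mono by auto
    have "?F v - ?F u < 1 / real K" using F_diff[OF uv] lt by linarith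
    then have "real K * ?F v < real K * ?F u + 1" using Kp by (simp add: field_simps)
    have "real K * ?F u \<le> real K * ?F x" "real K * ?F x \<le> real K * ?F v"
      using \<open>?F u \<le> ?F x\<close> \<open>?F x \<le> ?F v\<close> Kp by auto
    have "real r - 1 < real K * ?F x" using r1 \<open>real K * ?F u \<le> real K * ?F x\<close> by linarith
    then have a: "(real r - 1) / real K < ?F x" using Kp by (simp add: field_simps)
    have "real K * ?F x < real r + 2"
      using r1 \<open>real K * ?F x \<le> real K * ?F v\<close> \<open>real K * ?F v < real K * ?F u + 1\<close> by linarith
    then have b: "?F x < (real r + 2) / real K" using Kp by (simp add: field_simps)
    show "x \<in> blk K r" unfolding blk_def using a b by simp
  qed
  have A0: "0 \<le> A" using gb[of 0] by simp
  have pt: "\<bar>g y\<bar> \<le> A * indicator (blk K r) y" for y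
  proof (cases "g y = 0")
    case True then show ?thesis using A0 by simp
  next
    case False then have "y \<in> blk K r" using gs sub by blast
    then show ?thesis using gb[of y] by simp
  qed
  have e1: "\<bar>emp n g \<omega>\<bar> \<le> A * emp n (indicator (blk K r)) \<omega>"
  proof -
    have "\<bar>emp n g \<omega>\<bar> \<le> (\<Sum>i\<in>{1..n}. \<bar>g (Y i \<omega>)\<bar>)" unfolding emp_def by (rule sum_abs)
    also have "\<dots> \<le> (\<Sum>i\<in>{1..n}. A * indicator (blk K r) (Y i \<omega>))" by (intro sum_mono pt)
    also have "\<dots> = A * emp n (indicator (blk K r)) \<omega>" unfolding emp_def by (simp add: sum_distrib_left)
    finally show ?thesis .
  qed
  have e2: "emp n (indicator (blk K r)) \<omega> < mu n (indicator (blk K r)) + real n * s / 2"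
    using om rK unfolding BlockBad_def by (auto simp: not_le)
  have e3: "mu n (indicator (blk K r)) \<le> real n * (3 / real K)"
  proof -
    have "mu n (indicator (blk K r)) = real n * measure (Qd f) (blk K r)"
      by (subst mu_eq) auto
    also have "\<dots> \<le> real n * (3 / real K)" using blk_prob[OF K rK] by (intro mult_left_mono) auto
    finally show ?thesis .
  qed
  have e4: "\<bar>mu n g\<bar> \<le> real n * (A * (1 / real K))"
  proof -
    have "\<bar>integral\<^sup>L (Qd f) g\<bar> \<le> integral\<^sup>L (Qd f) (\<lambda>x. \<bar>g x\<bar>)"
      by (rule integral_abs_bound)
    also have "\<dots> \<le> integral\<^sup>L (Qd f) (\<lambda>x. A * indicator {u..v} x)"
    proof (rule integral_mono)
      show "integrable (Qd f) (\<lambda>x. \<bar>g x\<bar>)" using g gb by (intro integrable_Q[where A=A]) auto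
      show "integrable (Qd f) (\<lambda>x. A * indicator {u..v} x)"
        using A0 by (intro integrable_Q[where A=A]) (auto simp: indicator_def)
      fix x show "\<bar>g x\<bar> \<le> A * indicator {u..v} x"
        using gs[of x] gb[of x] A0 by (cases "g x = 0") auto
    qed
    also have "\<dots> = A * measure (Qd f) {u..v}" by simp
    also have "\<dots> \<le> A * (1 / real K)" using lt A0 by (intro mult_left_mono) auto
    finally have "\<bar>integral\<^sup>L (Qd f) g\<bar> \<le> A * (1 / real K)" .
    then have "real n * \<bar>integral\<^sup>L (Qd f) g\<bar> \<le> real n * (A * (1 / real K))"
      by (intro mult_left_mono) auto
    then show ?thesis using mu_eq[OF g, of n] by (simp add: abs_mult)
  qed
  have "\<bar>emp n g \<omega> - mu n g\<bar> \<le> \<bar>emp n g \<omega>\<bar> + \<bar>mu n g\<bar>" by linarith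
  also have "\<dots> \<le> A * (real n * (3 / real K) + real n * s / 2) + real n * (A * (1 / real K))"
  proof -
    have "A * emp n (indicator (blk K r)) \<omega> \<le> A * (real n * (3 / real K) + real n * s / 2)"
      using e2 e3 A0 by (intro mult_left_mono) auto
    then show ?thesis using e1 e4 by linarith
  qed
  also have "\<dots> = real n * A * (4 / real K + s / 2)" by (simp add: field_simps)
  finally show ?thesis .
qed


definition Heavy :: "real \<Rightarrow> nat \<Rightarrow> nat \<Rightarrow> int set" where
  "Heavy c R K = {k. 1 / real K \<le> measure (Qd f) (Iv c R k)}"

lemma overlap: "(\<Sum>k\<in>G. indicator (Iv c R k) x) \<le> real (2 * R + 1)" if "finite G"
proof -
  have "(\<Sum>k\<in>G. indicator (Iv c R k) x) = (\<Sum>k\<in>G \<inter> Wn (c*x) R. indicator (Iv c R k) x :: real)"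
    using that by (intro sum.mono_neutral_right) (auto simp: Iv_def indicator_def dest: Wn_mem)
  also have "\<dots> \<le> (\<Sum>k\<in>Wn (c*x) R. indicator (Iv c R k) x)"
    by (intro sum_mono2) auto
  also have "\<dots> \<le> (\<Sum>k\<in>Wn (c*x) R. 1)" by (intro sum_mono) (auto simp: indicator_def)
  also have "\<dots> = real (2 * R + 1)" by (simp add: Wn_card)
  finally show ?thesis .
qed

lemma heavy_card: assumes K: "K > 0"
  shows "finite (Heavy c R K) \<and> card (Heavy c R K) \<le> (2 * R + 1) * K"
proof (rule finite_if_finite_subsets_card_bdd)
  fix G assume G: "G \<subseteq> Heavy c R K" "finite G"
  have ii: "\<And>k. integrable (Qd f) (indicator (Iv c R k) :: real \<Rightarrow> real)"
    by (rule integrable_Q[where A=1]) (auto simp: indicator_def)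
  have "real (card G) / real K = (\<Sum>k\<in>G. 1 / real K)" by simp
  also have "\<dots> \<le> (\<Sum>k\<in>G. measure (Qd f) (Iv c R k))"
    using G by (intro sum_mono) (auto simp: Heavy_def)
  also have "\<dots> = (\<Sum>k\<in>G. integral\<^sup>L (Qd f) (indicator (Iv c R k)))"
    by (intro sum.cong refl) simp
  also have "\<dots> = integral\<^sup>L (Qd f) (\<lambda>x. \<Sum>k\<in>G. indicator (Iv c R k) x)"
  proof -
    have "\<And>k. integrable (Qd f) (indicator (Iv c R k) :: real \<Rightarrow> real)"
      by (rule integrable_Q[where A=1]) (auto simp: indicator_def)
    then show ?thesis using Bochner_Integration.integral_sum[where I=G and M="Qd f" and f="\<lambda>k. indicator (Iv c R k)"] by simp
  qed
  also have "\<dots> \<le> integral\<^sup>L (Qd f) (\<lambda>x. real (2 * R + 1))"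
  proof (rule integral_mono)
    show "integrable (Qd f) (\<lambda>x. \<Sum>k\<in>G. indicator (Iv c R k) x :: real)"
      using ii by (intro Bochner_Integration.integrable_sum) auto
    show "integrable (Qd f) (\<lambda>x. real (2 * R + 1))" by simp
    fix x show "(\<Sum>k\<in>G. indicator (Iv c R k) x) \<le> real (2 * R + 1)" using overlap[OF G(2)] .
  qed
  also have "\<dots> = real (2 * R + 1)" using Q.prob_space by simp
  finally have "real (card G) \<le> real (2 * R + 1) * real K" using K by (simp add: field_simps)
  then have "real (card G) \<le> real ((2 * R + 1) * K)" by (simp only: of_nat_mult)
  then show "card G \<le> (2 * R + 1) * K" by (simp only: of_nat_le_iff)
qed

definition LBad :: "nat \<Rightarrow> (real \<Rightarrow> real) \<Rightarrow> real \<Rightarrow> real \<Rightarrow> nat \<Rightarrow> nat \<Rightarrow> real \<Rightarrow> 'a set" where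
  "LBad n h a c R K x = (\<Union>k\<in>Heavy c R K. {\<omega>\<in>space M.
      real n * x \<le> \<bar>emp n (\<lambda>y. a * h (c * y - real_of_int k)) \<omega> - mu n (\<lambda>y. a * h (c * y - real_of_int k))\<bar>})"

lemma LBad_meas: assumes [measurable]: "h \<in> borel_measurable borel" "K > 0"
  shows "LBad n h a c R K x \<in> sets M"
proof -
  have fin: "finite (Heavy c R K)" using heavy_card[OF assms(2)] by simp
  show ?thesis unfolding LBad_def using fin by (intro sets.finite_UN) auto
qed

lemma LBad_prob:
  assumes h: "h \<in> borel_measurable borel" and hb: "\<And>y. \<bar>h y\<bar> \<le> B" and B: "B > 0"
    and a: "a > 0" and K: "K > 0" and n: "n > 0" and x: "x \<ge> 0"
  shows "prob (LBad n h a c R K x) \<le> real ((2 * R + 1) * K) * (2 * exp (- real n * x\<^sup>2 / (2 * (a * B)\<^sup>2)))"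
proof -
  have fin: "finite (Heavy c R K)" and card: "card (Heavy c R K) \<le> (2 * R + 1) * K"
    using heavy_card[OF K] by auto
  have gm: "(\<lambda>y. a * h (c * y - real_of_int k)) \<in> borel_measurable borel" for k
    using h by measurable
  have "prob (LBad n h a c R K x) \<le> (\<Sum>k\<in>Heavy c R K. prob {\<omega>\<in>space M.
      real n * x \<le> \<bar>emp n (\<lambda>y. a * h (c * y - real_of_int k)) \<omega> - mu n (\<lambda>y. a * h (c * y - real_of_int k))\<bar>})"
    unfolding LBad_def using fin gm by (intro measure_UNION_le) auto
  also have "\<dots> \<le> (\<Sum>k\<in>Heavy c R K. 2 * exp (- real n * x\<^sup>2 / (2 * (a * B)\<^sup>2)))"
  proof (intro sum_mono)
    fix k
    have bd: "\<bar>a * h (c * y - real_of_int k)\<bar> \<le> a * B" for y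
      using hb a by (simp add: abs_mult mult_left_mono)
    have "prob {\<omega>\<in>space M. real n * x \<le> \<bar>emp n (\<lambda>y. a * h (c * y - real_of_int k)) \<omega> - mu n (\<lambda>y. a * h (c * y - real_of_int k))\<bar>}
        \<le> 2 * exp (-2 * (real n * x)\<^sup>2 / (real n * (2 * (a * B))\<^sup>2))"
      unfolding emp_def mu_def using gm bd a B n x by (intro hoeff_abs) auto
    also have "-2 * (real n * x)\<^sup>2 / (real n * (2 * (a * B))\<^sup>2) = - real n * x\<^sup>2 / (2 * (a * B)\<^sup>2)"
      using n a B by (simp add: power2_eq_square field_simps)
    finally show "prob {\<omega>\<in>space M. real n * x \<le> \<bar>emp n (\<lambda>y. a * h (c * y - real_of_int k)) \<omega> - mu n (\<lambda>y. a * h (c * y - real_of_int k))\<bar>}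
        \<le> 2 * exp (- real n * x\<^sup>2 / (2 * (a * B)\<^sup>2))" .
  qed
  also have "\<dots> = real (card (Heavy c R K)) * (2 * exp (- real n * x\<^sup>2 / (2 * (a * B)\<^sup>2)))" by simp
  also have "\<dots> \<le> real ((2 * R + 1) * K) * (2 * exp (- real n * x\<^sup>2 / (2 * (a * B)\<^sup>2)))"
  proof (intro mult_right_mono)
    show "real (card (Heavy c R K)) \<le> real ((2 * R + 1) * K)" using card by (simp only: of_nat_le_iff)
  qed simp
  finally show ?thesis .
qed

lemma LBad_good:
  assumes h: "h \<in> borel_measurable borel" and hb: "\<And>y. \<bar>h y\<bar> \<le> B"
    and hs: "\<And>y. h y \<noteq> 0 \<Longrightarrow> \<bar>y\<bar> \<le> real R"
    and a: "a > 0" and c: "c > 0" and K: "K > 0" and n: "n > 0"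
    and om: "\<omega> \<in> space M" "\<omega> \<notin> LBad n h a c R K x" "\<omega> \<notin> BlockBad n K s"
    and x: "a * B * (4 / real K + s / 2) \<le> x"
  shows "\<bar>emp n (\<lambda>y. a * h (c * y - real_of_int k)) \<omega> - mu n (\<lambda>y. a * h (c * y - real_of_int k))\<bar> \<le> real n * x"
proof (cases "k \<in> Heavy c R K")
  case True
  then show ?thesis using om unfolding LBad_def by auto
next
  case False
  then have lt: "measure (Qd f) (Iv c R k) < 1 / real K" unfolding Heavy_def by auto
  have gm: "(\<lambda>y. a * h (c * y - real_of_int k)) \<in> borel_measurable borel"
    using h by measurable
  have bd: "\<bar>a * h (c * y - real_of_int k)\<bar> \<le> a * B" for y
    using hb a by (simp add: abs_mult mult_left_mono)
  have sup: "y \<in> {(real_of_int k - real R) / c .. (real_of_int k + real R) / c}"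
    if "a * h (c * y - real_of_int k) \<noteq> 0" for y
  proof -
    have "\<bar>c * y - real_of_int k\<bar> \<le> real R" using hs that by auto
    then show ?thesis using Iv_eq[OF c, of R k] unfolding Iv_def by auto
  qed
  have uv: "(real_of_int k - real R) / c \<le> (real_of_int k + real R) / c"
    using c by (intro divide_right_mono) auto
  have "\<bar>emp n (\<lambda>y. a * h (c * y - real_of_int k)) \<omega> - mu n (\<lambda>y. a * h (c * y - real_of_int k))\<bar>
      \<le> real n * (a * B) * (4 / real K + s / 2)"
    by (rule light[OF gm bd sup uv _ K n om(1) om(3)]) (use lt Iv_eq[OF c, of R k] in simp_all)
  also have "\<dots> \<le> real n * x" using x by (simp add: mult.assoc mult_left_mono)
  finally show ?thesis .
qed


lemma emp_int: assumes "g \<in> borel_measurable borel" "\<And>x. \<bar>g x\<bar> \<le> B"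
  shows "integrable M (emp n g)"
proof -
  have "integrable M (\<lambda>\<omega>. g (Y i \<omega>))" for i
    using assms by (intro integrable_const_bound[where B=B]) auto
  then show ?thesis unfolding emp_def by (intro Bochner_Integration.integrable_sum) auto
qed

lemma exp_emp: assumes "g \<in> borel_measurable borel" "\<And>x. \<bar>g x\<bar> \<le> B"
  shows "expectation (emp n g) = mu n g"
proof -
  have "integrable M (\<lambda>\<omega>. g (Y i \<omega>))" for i
    using assms by (intro integrable_const_bound[where B=B]) auto
  then show ?thesis unfolding emp_def mu_def by (intro Bochner_Integration.integral_sum) auto
qed

lemma exp_sum_emp:
  assumes A: "finite A" and g: "\<And>k. k \<in> A \<Longrightarrow> g k \<in> borel_measurable borel"
    and gb: "\<And>k x. k \<in> A \<Longrightarrow> \<bar>g k x\<bar> \<le> Bd k"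
  shows "integrable M (\<lambda>\<omega>. \<Sum>k\<in>A. emp n (g k) \<omega> * c k)"
    and "expectation (\<lambda>\<omega>. \<Sum>k\<in>A. emp n (g k) \<omega> * c k) = (\<Sum>k\<in>A. mu n (g k) * c k)"
proof -
  have i: "integrable M (\<lambda>\<omega>. emp n (g k) \<omega> * c k)" if "k \<in> A" for k
    using emp_int[OF g[OF that] gb[OF that]] by simp
  show "integrable M (\<lambda>\<omega>. \<Sum>k\<in>A. emp n (g k) \<omega> * c k)"
    using i by (intro Bochner_Integration.integrable_sum) auto
  have "expectation (\<lambda>\<omega>. \<Sum>k\<in>A. emp n (g k) \<omega> * c k) = (\<Sum>k\<in>A. expectation (\<lambda>\<omega>. emp n (g k) \<omega> * c k))"
    using i by (intro Bochner_Integration.integral_sum) auto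
  also have "\<dots> = (\<Sum>k\<in>A. mu n (g k) * c k)"
  proof (intro sum.cong refl)
    fix k assume k: "k \<in> A"
    have "expectation (\<lambda>\<omega>. emp n (g k) \<omega> * c k) = expectation (emp n (g k)) * c k" by simp
    also have "\<dots> = mu n (g k) * c k" using exp_emp[OF g[OF k] gb[OF k]] by simp
    finally show "expectation (\<lambda>\<omega>. emp n (g k) \<omega> * c k) = mu n (g k) * c k" .
  qed
  finally show "expectation (\<lambda>\<omega>. \<Sum>k\<in>A. emp n (g k) \<omega> * c k) = (\<Sum>k\<in>A. mu n (g k) * c k)" .
qed


lemma diff_formula:
  assumes phis: "\<And>x. \<phi> x \<noteq> 0 \<Longrightarrow> \<bar>x\<bar> \<le> real R" and psis: "\<And>x. \<psi> x \<noteq> 0 \<Longrightarrow> \<bar>x\<bar> \<le> real R"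
    and phim[measurable]: "\<phi> \<in> borel_measurable borel" and psim[measurable]: "\<psi> \<in> borel_measurable borel"
    and phib: "\<And>x. \<bar>\<phi> x\<bar> \<le> Bp" and psib: "\<And>x. \<bar>\<psi> x\<bar> \<le> Bs"
  shows "wavelet_est \<phi> \<psi> J n (\<lambda>i. Y i \<omega>) y - expectation (\<lambda>\<omega>'. wavelet_est \<phi> \<psi> J n (\<lambda>i. Y i \<omega>') y)
   = (\<Sum>k\<in>Wn y R. (emp n (wphi \<phi> k) \<omega> - mu n (wphi \<phi> k)) * wphi \<phi> k y) / real n
   + (\<Sum>p\<in>Sigma {l::nat. int l \<le> J} (\<lambda>l. Wn (2^l * y) R).
        (emp n (wpsi \<psi> (fst p) (snd p)) \<omega> - mu n (wpsi \<psi> (fst p) (snd p))) * wpsi \<psi> (fst p) (snd p) y) / real n"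
proof -
  define Ls where "Ls = {l::nat. int l \<le> J}"
  have finLs: "finite Ls" unfolding Ls_def by (rule finite_subset[of _ "{..nat J}"]) auto
  define Sg where "Sg = Sigma Ls (\<lambda>l. Wn (2^l * y) R)"
  have finSg: "finite Sg" unfolding Sg_def using finLs by auto
  define S0 where "S0 = (\<lambda>\<omega>'. \<Sum>k\<in>Wn y R. emp n (wphi \<phi> k) \<omega>' * wphi \<phi> k y)"
  define S1 where "S1 = (\<lambda>\<omega>'. \<Sum>p\<in>Sg. emp n (wpsi \<psi> (fst p) (snd p)) \<omega>' * wpsi \<psi> (fst p) (snd p) y)"
  have est: "wavelet_est \<phi> \<psi> J n (\<lambda>i. Y i \<omega>') y = S0 \<omega>' / real n + S1 \<omega>' / real n" for \<omega>'
  proof -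
    have "wavelet_est \<phi> \<psi> J n (\<lambda>i. Y i \<omega>') y =
      (\<Sum>k\<in>Wn y R. (1 / real n * (\<Sum>i\<in>{1..n}. wphi \<phi> k (Y i \<omega>'))) * wphi \<phi> k y) +
      (\<Sum>l\<in>Ls. \<Sum>k\<in>Wn (2^l * y) R. (1 / real n * (\<Sum>i\<in>{1..n}. wpsi \<psi> l k (Y i \<omega>'))) * wpsi \<psi> l k y)"
      unfolding Ls_def by (rule est_decomp[OF phis psis])
    also have "(\<Sum>k\<in>Wn y R. (1 / real n * (\<Sum>i\<in>{1..n}. wphi \<phi> k (Y i \<omega>'))) * wphi \<phi> k y) = S0 \<omega>' / real n"
      unfolding S0_def emp_def sum_divide_distrib by (intro sum.cong refl) simp
    also have "(\<Sum>l\<in>Ls. \<Sum>k\<in>Wn (2^l * y) R. (1 / real n * (\<Sum>i\<in>{1..n}. wpsi \<psi> l k (Y i \<omega>'))) * wpsi \<psi> l k y)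
       = (\<Sum>p\<in>Sg. (1 / real n * (\<Sum>i\<in>{1..n}. wpsi \<psi> (fst p) (snd p) (Y i \<omega>'))) * wpsi \<psi> (fst p) (snd p) y)"
      unfolding Sg_def using finLs by (subst sum.Sigma) (auto simp: case_prod_beta)
    also have "\<dots> = S1 \<omega>' / real n"
      unfolding S1_def emp_def sum_divide_distrib by (intro sum.cong refl) simp
    finally show ?thesis .
  qed
  have wphim: "wphi \<phi> k \<in> borel_measurable borel" for k unfolding wphi_def by measurable
  have wpsim: "wpsi \<psi> l k \<in> borel_measurable borel" for l k unfolding wpsi_def by measurable
  have wphib: "\<bar>wphi \<phi> k x\<bar> \<le> Bp" for k x unfolding wphi_def by (rule phib)
  have wpsib: "\<bar>wpsi \<psi> l k x\<bar> \<le> 2 powr (real l / 2) * Bs" for l k x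
    unfolding wpsi_def using psib by (simp add: abs_mult mult_left_mono)
  note E0 = exp_sum_emp[where A="Wn y R" and g="wphi \<phi>" and c="\<lambda>k. wphi \<phi> k y" and Bd="\<lambda>_. Bp", OF Wn_fin wphim wphib]
  note E1 = exp_sum_emp[where A="Sg" and g="\<lambda>p. wpsi \<psi> (fst p) (snd p)" and c="\<lambda>p. wpsi \<psi> (fst p) (snd p) y"
      and Bd="\<lambda>p. 2 powr (real (fst p) / 2) * Bs", OF finSg wpsim wpsib]
  have "expectation (\<lambda>\<omega>'. wavelet_est \<phi> \<psi> J n (\<lambda>i. Y i \<omega>') y) = expectation (\<lambda>\<omega>'. S0 \<omega>' / real n + S1 \<omega>' / real n)"
    using est by simp
  also have "\<dots> = expectation S0 / real n + expectation S1 / real n"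
    using E0(1) E1(1) unfolding S0_def S1_def by (simp add: Bochner_Integration.integral_add)
  also have "\<dots> = (\<Sum>k\<in>Wn y R. mu n (wphi \<phi> k) * wphi \<phi> k y) / real n
      + (\<Sum>p\<in>Sg. mu n (wpsi \<psi> (fst p) (snd p)) * wpsi \<psi> (fst p) (snd p) y) / real n"
    unfolding S0_def S1_def E0(2) E1(2) ..
  finally have ex: "expectation (\<lambda>\<omega>'. wavelet_est \<phi> \<psi> J n (\<lambda>i. Y i \<omega>') y) = \<dots>" .
  show ?thesis unfolding ex unfolding est S0_def S1_def Sg_def[symmetric] Ls_def[symmetric]
    by (simp add: diff_divide_distrib sum_subtractf left_diff_distrib)
qed


lemma good_bound:
  assumes phis: "\<And>x. \<phi> x \<noteq> 0 \<Longrightarrow> \<bar>x\<bar> \<le> real R" and psis: "\<And>x. \<psi> x \<noteq> 0 \<Longrightarrow> \<bar>x\<bar> \<le> real R"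
    and phim[measurable]: "\<phi> \<in> borel_measurable borel" and psim[measurable]: "\<psi> \<in> borel_measurable borel"
    and phib: "\<And>x. \<bar>\<phi> x\<bar> \<le> Bp" and psib: "\<And>x. \<bar>\<psi> x\<bar> \<le> Bs"
    and Bp: "Bp > 0" and Bs: "Bs > 0" and n: "n > 0" and K: "K > 0" and s: "s > 0"
    and Ks: "8 / s \<le> real K" and J: "J = int N"
    and om: "\<omega> \<in> space M" "\<omega> \<notin> BlockBad n K s" "\<omega> \<notin> LBad n \<phi> 1 1 R K (Bp * s)"
       "\<And>l. l \<le> N \<Longrightarrow> \<omega> \<notin> LBad n \<psi> (2 powr (real l / 2)) (2^l) R K (2 powr (real l / 2) * Bs * s * (1 + real (N - l)))"
  shows "\<bar>wavelet_est \<phi> \<psi> J n (\<lambda>i. Y i \<omega>) y - expectation (\<lambda>\<omega>'. wavelet_est \<phi> \<psi> J n (\<lambda>i. Y i \<omega>') y)\<bar>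
     \<le> real (2 * R + 1) * (Bp\<^sup>2 + 4 * Bs\<^sup>2) * s * 2^N"
proof -
  have Kp: "real K > 0" using K by simp
  have "8 \<le> real K * s" using Ks s by (simp add: field_simps)
  then have K4: "4 / real K \<le> s / 2" using Kp by (simp add: field_simps)
  define x where "x = (\<lambda>l::nat. 2 powr (real l / 2) * Bs * s * (1 + real (N - l)))"
  have c0: "\<bar>emp n (wphi \<phi> k) \<omega> - mu n (wphi \<phi> k)\<bar> \<le> real n * (Bp * s)" for k
  proof -
    have eq: "wphi \<phi> k = (\<lambda>y. 1 * \<phi> (1 * y - real_of_int k))" by (simp add: fun_eq_iff wphi_def)
    have "1 * Bp * (4 / real K + s / 2) \<le> Bp * s" using K4 Bp by simp
    from LBad_good[OF phim phib phis _ _ K n om(1) om(3) om(2) this] show ?thesis unfolding eq by simp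
  qed
  have c1: "\<bar>emp n (wpsi \<psi> l k) \<omega> - mu n (wpsi \<psi> l k)\<bar> \<le> real n * x l" if l: "l \<le> N" for l k
  proof -
    have eq: "wpsi \<psi> l k = (\<lambda>y. 2 powr (real l / 2) * \<psi> (2^l * y - real_of_int k))" by (simp add: fun_eq_iff wpsi_def)
    have "0 \<le> s * real (N - l)" using s by simp
    moreover have "s * (1 + real (N - l)) = s + s * real (N - l)" by (simp add: algebra_simps)
    ultimately have "(4 / real K + s / 2) \<le> s * (1 + real (N - l))" using K4 by linarith
    then have "2 powr (real l / 2) * Bs * (4 / real K + s / 2) \<le> x l"
      unfolding x_def using Bs by (simp add: mult.assoc mult_left_mono)
    from LBad_good[OF psim psib psis _ _ K n om(1) om(4)[OF l] om(2) this[unfolded x_def]] show ?thesis unfolding eq x_def by simp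
  qed
  have Ls: "{l::nat. int l \<le> J} = {..N}" using J by auto
  define Sg where "Sg = Sigma {..N} (\<lambda>l. Wn (2^l * y) R)"
  have finSg: "finite Sg" unfolding Sg_def by auto
  have wphib: "\<bar>wphi \<phi> k y\<bar> \<le> Bp" for k unfolding wphi_def by (rule phib)
  have wpsib: "\<bar>wpsi \<psi> l k y\<bar> \<le> 2 powr (real l / 2) * Bs" for l k
    unfolding wpsi_def using psib by (simp add: abs_mult mult_left_mono)
  have T0: "\<bar>\<Sum>k\<in>Wn y R. (emp n (wphi \<phi> k) \<omega> - mu n (wphi \<phi> k)) * wphi \<phi> k y\<bar> \<le> real n * (real (2 * R + 1) * (Bp\<^sup>2 * s))"
  proof -
    have "\<bar>\<Sum>k\<in>Wn y R. (emp n (wphi \<phi> k) \<omega> - mu n (wphi \<phi> k)) * wphi \<phi> k y\<bar>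
        \<le> (\<Sum>k\<in>Wn y R. \<bar>(emp n (wphi \<phi> k) \<omega> - mu n (wphi \<phi> k)) * wphi \<phi> k y\<bar>)" by (rule sum_abs)
    also have "\<dots> \<le> (\<Sum>k\<in>Wn y R. real n * (Bp * s) * Bp)"
      unfolding abs_mult using Bp s by (intro sum_mono mult_mono c0 wphib) auto
    also have "\<dots> = real n * (real (2 * R + 1) * (Bp\<^sup>2 * s))" by (simp add: Wn_card power2_eq_square)
    finally show ?thesis .
  qed
  have pw: "2 powr (real l / 2) * (2 powr (real l / 2)) = (2::real)^l" for l
    by (simp add: powr_add[symmetric] powr_realpow)
  have T1: "\<bar>\<Sum>p\<in>Sg. (emp n (wpsi \<psi> (fst p) (snd p)) \<omega> - mu n (wpsi \<psi> (fst p) (snd p))) * wpsi \<psi> (fst p) (snd p) y\<bar>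
      \<le> real n * (real (2 * R + 1) * (4 * Bs\<^sup>2 * s * 2^N))"
  proof -
    have "\<bar>\<Sum>p\<in>Sg. (emp n (wpsi \<psi> (fst p) (snd p)) \<omega> - mu n (wpsi \<psi> (fst p) (snd p))) * wpsi \<psi> (fst p) (snd p) y\<bar>
        \<le> (\<Sum>p\<in>Sg. \<bar>(emp n (wpsi \<psi> (fst p) (snd p)) \<omega> - mu n (wpsi \<psi> (fst p) (snd p))) * wpsi \<psi> (fst p) (snd p) y\<bar>)"
      by (rule sum_abs)
    also have "\<dots> \<le> (\<Sum>p\<in>Sg. real n * x (fst p) * (2 powr (real (fst p) / 2) * Bs))"
      unfolding abs_mult
    proof (intro sum_mono mult_mono c1 wpsib)
      fix p assume "p \<in> Sg" then show "fst p \<le> N" unfolding Sg_def by auto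
    next
      fix p show "0 \<le> real n * x (fst p)" unfolding x_def using Bs s by simp
    qed auto
    also have "\<dots> = (\<Sum>l\<le>N. \<Sum>k\<in>Wn (2^l * y) R. real n * x l * (2 powr (real l / 2) * Bs))"
      unfolding Sg_def by (subst sum.Sigma) (auto simp: case_prod_beta)
    also have "\<dots> = (\<Sum>l\<le>N. real (2 * R + 1) * (real n * (Bs\<^sup>2 * s) * ((2::real)^l * (1 + real (N - l)))))"
    proof (intro sum.cong refl)
      fix l
      have "real n * x l * (2 powr (real l / 2) * Bs) = real n * (Bs\<^sup>2 * s) * ((2 powr (real l / 2) * 2 powr (real l / 2)) * (1 + real (N - l)))"
        unfolding x_def by (simp add: power2_eq_square algebra_simps)
      then show "(\<Sum>k\<in>Wn (2^l * y) R. real n * x l * (2 powr (real l / 2) * Bs))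
         = real (2 * R + 1) * (real n * (Bs\<^sup>2 * s) * ((2::real)^l * (1 + real (N - l))))"
        unfolding pw by (simp add: Wn_card)
    qed
    also have "\<dots> = real (2 * R + 1) * (real n * (Bs\<^sup>2 * s)) * (\<Sum>l\<le>N. (2::real)^l * (1 + real (N - l)))"
      by (simp add: sum_distrib_left mult.assoc)
    also have "\<dots> \<le> real (2 * R + 1) * (real n * (Bs\<^sup>2 * s)) * (4 * 2^N)"
      using s by (intro mult_left_mono sum_geo) auto
    also have "\<dots> = real n * (real (2 * R + 1) * (4 * Bs\<^sup>2 * s * 2^N))" by (simp add: algebra_simps)
    finally show ?thesis .
  qed
  have D: "wavelet_est \<phi> \<psi> J n (\<lambda>i. Y i \<omega>) y - expectation (\<lambda>\<omega>'. wavelet_est \<phi> \<psi> J n (\<lambda>i. Y i \<omega>') y)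
   = (\<Sum>k\<in>Wn y R. (emp n (wphi \<phi> k) \<omega> - mu n (wphi \<phi> k)) * wphi \<phi> k y) / real n
   + (\<Sum>p\<in>Sg. (emp n (wpsi \<psi> (fst p) (snd p)) \<omega> - mu n (wpsi \<psi> (fst p) (snd p))) * wpsi \<psi> (fst p) (snd p) y) / real n"
    using diff_formula[OF phis psis phim psim phib psib, of J n \<omega> y] unfolding Ls Sg_def .
  have np: "real n > 0" using n by simp
  have "\<bar>wavelet_est \<phi> \<psi> J n (\<lambda>i. Y i \<omega>) y - expectation (\<lambda>\<omega>'. wavelet_est \<phi> \<psi> J n (\<lambda>i. Y i \<omega>') y)\<bar>
      \<le> real (2 * R + 1) * (Bp\<^sup>2 * s) + real (2 * R + 1) * (4 * Bs\<^sup>2 * s * 2^N)"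
    unfolding D using T0 T1 np by (simp add: abs_divide divide_le_eq field_simps abs_triangle_ineq[THEN order_trans])
  also have "\<dots> \<le> real (2 * R + 1) * (Bp\<^sup>2 + 4 * Bs\<^sup>2) * s * 2^N"
  proof -
    have "Bp\<^sup>2 * s * 1 \<le> Bp\<^sup>2 * s * 2^N" using s by (intro mult_left_mono) auto
    then have "real (2 * R + 1) * (Bp\<^sup>2 * s) \<le> real (2 * R + 1) * (Bp\<^sup>2 * s * 2^N)"
      by (intro mult_left_mono) auto
    then show ?thesis by (simp add: algebra_simps)
  qed
  finally show ?thesis .
qed


definition Bad :: "nat \<Rightarrow> (real \<Rightarrow> real) \<Rightarrow> (real \<Rightarrow> real) \<Rightarrow> nat \<Rightarrow> real \<Rightarrow> real \<Rightarrow> real \<Rightarrow> nat \<Rightarrow> nat \<Rightarrow> 'a set" where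
  "Bad n \<phi> \<psi> R Bp Bs s K N = LBad n \<phi> 1 1 R K (Bp * s) \<union>
     (\<Union>l\<in>{..N}. LBad n \<psi> (2 powr (real l / 2)) (2^l) R K (2 powr (real l / 2) * Bs * s * (1 + real (N - l))))
     \<union> BlockBad n K s"

lemma Bad_meas: assumes "\<phi> \<in> borel_measurable borel" "\<psi> \<in> borel_measurable borel" "K > 0"
  shows "Bad n \<phi> \<psi> R Bp Bs s K N \<in> sets M"
  unfolding Bad_def using assms LBad_meas BlockBad_meas by auto

lemma exp_half: "exp (- real m) \<le> (1/2::real)^m"
proof -
  have "exp (1::real) \<ge> 2" using exp_ge_add_one_self[of 1] by simp
  then have "exp (-1::real) \<le> 1/2" by (simp add: exp_minus field_simps)
  then have "exp (-1::real)^m \<le> (1/2)^m" by (intro power_mono) auto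
  then show ?thesis by (simp add: exp_of_nat_mult[symmetric])
qed

lemma Bad_prob:
  assumes phim: "\<phi> \<in> borel_measurable borel" and psim: "\<psi> \<in> borel_measurable borel"
    and phib: "\<And>x. \<bar>\<phi> x\<bar> \<le> Bp" and psib: "\<And>x. \<bar>\<psi> x\<bar> \<le> Bs"
    and Bp: "Bp > 0" and Bs: "Bs > 0" and n: "n > 0" and K: "K > 0" and s: "s > 0"
    and L: "2 \<le> real n * s\<^sup>2"
  shows "prob (Bad n \<phi> \<psi> R Bp Bs s K N) \<le> real (6 * (2 * R + 1) + 2) * real K * exp (- (real n * s\<^sup>2) / 2)"
proof -
  define L where "L = real n * s\<^sup>2"
  define C where "C = real ((2 * R + 1) * K)"
  have C0: "C \<ge> 0" unfolding C_def by simp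
  have np: "real n > 0" using n by simp
  have p0: "prob (LBad n \<phi> 1 1 R K (Bp * s)) \<le> C * (2 * exp (- L / 2))"
  proof -
    have "prob (LBad n \<phi> 1 1 R K (Bp * s)) \<le> C * (2 * exp (- real n * (Bp * s)\<^sup>2 / (2 * (1 * Bp)\<^sup>2)))"
      unfolding C_def using Bp s by (intro LBad_prob[OF phim phib Bp _ K n]) auto
    also have "- real n * (Bp * s)\<^sup>2 / (2 * (1 * Bp)\<^sup>2) = - L / 2"
      unfolding L_def using Bp by (simp add: power2_eq_square field_simps)
    finally show ?thesis .
  qed
  have pl: "prob (LBad n \<psi> (2 powr (real l / 2)) (2^l) R K (2 powr (real l / 2) * Bs * s * (1 + real (N - l))))
      \<le> C * (2 * (exp (- L / 2) * (1/2)^(N - l)))" if "l \<le> N" for l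
  proof -
    define a where "a = (2::real) powr (real l / 2)"
    have a: "a > 0" unfolding a_def by simp
    define m where "m = real (N - l)"
    have m: "m \<ge> 0" unfolding m_def by simp
    have "prob (LBad n \<psi> a (2^l) R K (a * Bs * s * (1 + m)))
       \<le> C * (2 * exp (- real n * (a * Bs * s * (1 + m))\<^sup>2 / (2 * (a * Bs)\<^sup>2)))"
      unfolding C_def using a Bs s m by (intro LBad_prob[OF psim psib Bs a K n]) auto
    also have "- real n * (a * Bs * s * (1 + m))\<^sup>2 / (2 * (a * Bs)\<^sup>2) = - L * (1 + m)\<^sup>2 / 2"
      unfolding L_def using a Bs by (simp add: power2_eq_square field_simps)
    also have "exp (- L * (1 + m)\<^sup>2 / 2) \<le> exp (- L / 2) * (1/2)^(N - l)"
    proof -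
      have "(1 + m) \<le> (1 + m)\<^sup>2" using m by (simp add: power2_eq_square)
      then have "L * (1 + m) \<le> L * (1 + m)\<^sup>2" using L unfolding L_def by (intro mult_left_mono) auto
      moreover have "2 * m \<le> L * m" using L m unfolding L_def by (intro mult_right_mono) auto
      ultimately have "- L * (1 + m)\<^sup>2 / 2 \<le> - L / 2 + - m" by (simp add: algebra_simps)
      then have "exp (- L * (1 + m)\<^sup>2 / 2) \<le> exp (- L / 2 + - m)" by simp
      also have "\<dots> = exp (- L / 2) * exp (- real (N - l))" unfolding m_def by (subst exp_add[symmetric]) simp
      also have "\<dots> \<le> exp (- L / 2) * (1/2)^(N - l)" by (intro mult_left_mono exp_half) auto
      finally show ?thesis .
    qed
    then have "C * (2 * exp (- L * (1 + m)\<^sup>2 / 2)) \<le> C * (2 * (exp (- L / 2) * (1/2)^(N - l)))"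
      using C0 by (intro mult_left_mono) auto
    finally show ?thesis unfolding a_def m_def .
  qed
  have pb: "prob (BlockBad n K s) \<le> real (K + 1) * exp (- L / 2)"
    using BlockBad_prob[OF n, of s K] s unfolding L_def by simp
  have mL: "LBad n \<psi> (2 powr (real l / 2)) (2^l) R K (2 powr (real l / 2) * Bs * s * (1 + real (N - l))) \<in> sets M" for l
    using LBad_meas[OF psim K] .
  have mU: "(\<Union>l\<in>{..N}. LBad n \<psi> (2 powr (real l / 2)) (2^l) R K (2 powr (real l / 2) * Bs * s * (1 + real (N - l)))) \<in> sets M"
    by (intro sets.finite_UN finite_atMost mL)
  have "prob (Bad n \<phi> \<psi> R Bp Bs s K N) \<le> prob (LBad n \<phi> 1 1 R K (Bp * s) \<union>
     (\<Union>l\<in>{..N}. LBad n \<psi> (2 powr (real l / 2)) (2^l) R K (2 powr (real l / 2) * Bs * s * (1 + real (N - l)))))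
     + prob (BlockBad n K s)"
    unfolding Bad_def using LBad_meas[OF phim K] LBad_meas[OF psim K] BlockBad_meas
    by (intro measure_Un_le) auto
  also have "prob (LBad n \<phi> 1 1 R K (Bp * s) \<union>
     (\<Union>l\<in>{..N}. LBad n \<psi> (2 powr (real l / 2)) (2^l) R K (2 powr (real l / 2) * Bs * s * (1 + real (N - l)))))
     \<le> prob (LBad n \<phi> 1 1 R K (Bp * s)) + prob (\<Union>l\<in>{..N}. LBad n \<psi> (2 powr (real l / 2)) (2^l) R K (2 powr (real l / 2) * Bs * s * (1 + real (N - l))))"
    using LBad_meas[OF phim K] mU by (intro measure_Un_le)
  also have "prob (\<Union>l\<in>{..N}. LBad n \<psi> (2 powr (real l / 2)) (2^l) R K (2 powr (real l / 2) * Bs * s * (1 + real (N - l))))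
     \<le> (\<Sum>l\<le>N. prob (LBad n \<psi> (2 powr (real l / 2)) (2^l) R K (2 powr (real l / 2) * Bs * s * (1 + real (N - l)))))"
    by (intro measure_UNION_le finite_atMost mL)
  also have "\<dots> \<le> (\<Sum>l\<le>N. C * (2 * (exp (- L / 2) * (1/2)^(N - l))))"
    using pl by (intro sum_mono) auto
  also have "\<dots> = C * 2 * exp (- L / 2) * (\<Sum>l\<le>N. (1/2::real)^(N - l))"
    by (simp add: sum_distrib_left mult.assoc)
  also have "\<dots> \<le> C * 2 * exp (- L / 2) * 2"
    using C0 by (intro mult_left_mono sum_half) auto
  finally have "prob (Bad n \<phi> \<psi> R Bp Bs s K N) \<le> C * (2 * exp (- L / 2)) + C * 2 * exp (- L / 2) * 2 + real (K + 1) * exp (- L / 2)"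
    using p0 pb by linarith
  also have "\<dots> = (6 * C + real K + 1) * exp (- L / 2)" by (simp add: algebra_simps)
  also have "\<dots> \<le> real (6 * (2 * R + 1) + 2) * real K * exp (- L / 2)"
  proof (intro mult_right_mono)
    have "real K \<ge> 1" using K by simp
    then show "6 * C + real K + 1 \<le> real (6 * (2 * R + 1) + 2) * real K" unfolding C_def by (simp add: algebra_simps)
  qed simp
  finally show ?thesis unfolding L_def by simp
qed

end

lemma asym: assumes "\<beta> > 1/2"
  shows "eventually (\<lambda>n::nat. 1 \<le> ln (real n) \<and> 5 * ln (real n) \<le> ln (real n) powr (2*\<beta>)) sequentially"
proof -
  define T where "T = max 1 ((5::real) powr (1/(2*\<beta>-1)))"
  have "filterlim (\<lambda>n::nat. ln (real n)) at_top sequentially"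
    by (rule filterlim_compose[OF ln_at_top filterlim_real_sequentially])
  then have "eventually (\<lambda>n. T \<le> ln (real n)) sequentially" by (simp add: filterlim_at_top)
  then show ?thesis
  proof (rule eventually_mono)
    fix n :: nat assume T: "T \<le> ln (real n)"
    define x where "x = ln (real n)"
    have x1: "1 \<le> x" using T by (simp add: T_def x_def)
    have b: "2*\<beta>-1 > 0" using assms by simp
    have "(5::real) = (5 powr (1/(2*\<beta>-1))) powr (2*\<beta>-1)" using b by (simp add: powr_powr)
    also have "\<dots> \<le> x powr (2*\<beta>-1)" using T b by (intro powr_mono2) (auto simp: T_def x_def)
    finally have "5 \<le> x powr (2*\<beta>-1)" .
    then have "5 * x \<le> x powr (2*\<beta>-1) * x" using x1 by (intro mult_right_mono) auto
    also have "x powr (2*\<beta>-1) * x = x powr (2*\<beta>)" 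
    proof -
      have "x powr (2*\<beta>-1) * x = x powr (2*\<beta>-1) * x powr 1" using x1 by simp
      also have "\<dots> = x powr (2*\<beta>-1 + 1)" by (rule powr_add[symmetric])
      also have "\<dots> = x powr (2*\<beta>)" by (simp only: diff_add_cancel)
      finally show ?thesis .
    qed
    finally show "1 \<le> ln (real n) \<and> 5 * ln (real n) \<le> ln (real n) powr (2*\<beta>)" using x1 unfolding x_def by simp
  qed
qed

theorem proposition1:
  fixes M :: "'a measure" and Y :: "nat \<Rightarrow> 'a \<Rightarrow> real" and f :: "real \<Rightarrow> real"
    and \<phi> \<psi> \<Phi> :: "real \<Rightarrow> real" and j :: "nat \<Rightarrow> int"
  assumes prob: "prob_space M"
    and indep: "prob_space.indep_vars M (\<lambda>_. borel) Y UNIV"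
    and dens: "\<And>i. distributed M lborel (Y i) (\<lambda>x. ennreal (f x))"
    and f_nonneg: "\<And>x. 0 \<le> f x"
    and f_L2: "integrable lborel (\<lambda>x. (f x)\<^sup>2)"
    and basis: "L2_orthonormal_basis (wfam \<phi> \<psi>)"
    and j_mono: "mono j"
    and j_lim: "filterlim j at_top sequentially"
    \<comment> \<open>(A4)\<close>
    and A4_phi_bdd: "bounded (range \<phi>)"
    and A4_phi_supp: "\<exists>R. \<forall>x. R < \<bar>x\<bar> \<longrightarrow> \<phi> x = 0"
    and A4_psi_bdd: "bounded (range \<psi>)"
    and A4_psi_supp: "\<exists>R. \<forall>x. R < \<bar>x\<bar> \<longrightarrow> \<psi> x = 0"
    \<comment> \<open>(A5)\<close>
    and A5_dom: "\<And>x y. \<bar>wkernel \<phi> x y\<bar> \<le> \<Phi> (x - y)"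
    and A5_nonneg: "\<And>u. 0 \<le> \<Phi> u"
    and A5_bdd: "bounded (range \<Phi>)"
    and A5_supp: "\<exists>R. \<forall>u. R < \<bar>u\<bar> \<longrightarrow> \<Phi> u = 0"
    and A5_sym: "\<And>u. \<Phi> (- u) = \<Phi> u"
    and A5_sq: "integrable lborel (\<lambda>u. u\<^sup>2 * (\<Phi> u)\<^sup>2)"
    and A5_mom: "\<And>k::nat. k \<in> {0, 1, 4} \<Longrightarrow> integrable lborel (\<lambda>u. \<bar>u\<bar> ^ k * \<Phi> u)"
    and A5_int: "\<And>x (k::nat). k \<in> {1, 2, 3} \<Longrightarrow>
                   integrable lborel (\<lambda>y. wkernel \<phi> x y * (y - x) ^ k)"
    and A5_van: "\<And>x (k::nat). k \<in> {1, 2, 3} \<Longrightarrow>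
                   (LINT y|lborel. wkernel \<phi> x y * (y - x) ^ k) = 0"
  shows "\<forall>\<beta>::real. \<beta> > 1/2 \<longrightarrow>
           (AE \<omega> in M. \<exists>C::real. \<forall>\<^sub>F n in sequentially. \<forall>y::real.
              \<bar>wavelet_est \<phi> \<psi> (j n) n (\<lambda>i. Y i \<omega>) y
                 - prob_space.expectation M (\<lambda>\<omega>'. wavelet_est \<phi> \<psi> (j n) n (\<lambda>i. Y i \<omega>') y)\<bar>
              \<le> C * (ln (real n) powr \<beta> * 2 powr (real_of_int (j n)) / sqrt (real n)))"
  proof (intro allI impI)
  fix \<beta> :: real assume \<beta>: "\<beta> > 1/2"
  have ctx: "wv_ctx M Y f" unfolding wv_ctx_def wv_ctx_axioms_def using prob indep dens by auto
  interpret W: wv_ctx M Y f by (rule ctx)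
  obtain Bp where Bp: "Bp > 0" "\<And>x. \<bar>\<phi> x\<bar> \<le> Bp" using A4_phi_bdd unfolding bounded_pos by auto
  obtain Bs where Bs: "Bs > 0" "\<And>x. \<bar>\<psi> x\<bar> \<le> Bs" using A4_psi_bdd unfolding bounded_pos by auto
  obtain R1 where R1: "\<And>x. R1 < \<bar>x\<bar> \<Longrightarrow> \<phi> x = 0" using A4_phi_supp by blast
  obtain R2 where R2: "\<And>x. R2 < \<bar>x\<bar> \<Longrightarrow> \<psi> x = 0" using A4_psi_supp by blast
  define R where "R = nat \<lceil>max R1 R2\<rceil>"
  have RR: "R1 \<le> real R" "R2 \<le> real R" unfolding R_def by linarith+
  have phis: "\<And>x. \<phi> x \<noteq> 0 \<Longrightarrow> \<bar>x\<bar> \<le> real R" using R1 RR by force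
  have psis: "\<And>x. \<psi> x \<noteq> 0 \<Longrightarrow> \<bar>x\<bar> \<le> real R" using R2 RR by force
  have bm: "\<And>a. wfam \<phi> \<psi> a \<in> borel_measurable borel" using basis unfolding L2_orthonormal_basis_def by blast
  have "wfam \<phi> \<psi> (None, 0) = \<phi>" by (simp add: wfam_def wphi_def fun_eq_iff)
  then have phim: "\<phi> \<in> borel_measurable borel" using bm by metis
  have "wfam \<phi> \<psi> (Some 0, 0) = \<psi>" by (simp add: wfam_def wpsi_def fun_eq_iff)
  then have psim: "\<psi> \<in> borel_measurable borel" using bm by metis
  define s where "s = (\<lambda>n::nat. ln (real n) powr \<beta> / sqrt (real n))"
  define K where "K = (\<lambda>n. nat \<lceil>8 / s n\<rceil> + 1)"
  define A where "A = (\<lambda>n. W.Bad n \<phi> \<psi> R Bp Bs (s n) (K n) (nat (j n)))"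
  define C1 where "C1 = real (6 * (2 * R + 1) + 2)"
  have Kp: "K n > 0" for n unfolding K_def by simp
  have Ameas: "A n \<in> sets M" for n unfolding A_def by (rule W.Bad_meas[OF phim psim Kp])
  have key: "measure M (A n) \<le> 10 * C1 * inverse (real n ^ 2)"
    if n3: "1 \<le> ln (real n)" and n5: "5 * ln (real n) \<le> ln (real n) powr (2*\<beta>)" for n
  proof -
    have npos: "real n > 0" using n3 by (cases "n = 0") auto
    then have n: "n > 0" by simp
    have sq1: "1 \<le> sqrt (real n)" using npos n3 ln_ge_zero_imp_ge_one[of "real n"] by simp
    have lp1: "1 \<le> ln (real n) powr \<beta>" using n3 \<beta> by (intro ge_one_powr_ge_zero) auto
    have sp: "s n > 0" unfolding s_def using lp1 npos by (intro divide_pos_pos) auto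
    have L: "real n * (s n)\<^sup>2 = ln (real n) powr (2*\<beta>)"
    proof -
      have "real n * (s n)\<^sup>2 = (ln (real n) powr \<beta>)\<^sup>2" unfolding s_def using npos
        by (simp add: power_divide)
      also have "\<dots> = ln (real n) powr (2*\<beta>)" using n3
        by (simp add: power2_eq_square powr_add[symmetric])
      finally show ?thesis .
    qed
    have L2: "2 \<le> real n * (s n)\<^sup>2" using L n3 n5 by simp
    have P: "measure M (A n) \<le> C1 * real (K n) * exp (- (real n * (s n)\<^sup>2) / 2)"
      unfolding A_def C1_def by (rule W.Bad_prob[OF phim psim Bp(2) Bs(2) Bp(1) Bs(1) n Kp[of n] sp L2])
    have Kb: "real (K n) \<le> 10 * sqrt (real n)"
    proof -
      have "real (K n) \<le> 8 / s n + 2" unfolding K_def using sp by (simp add: of_nat_nat) linarith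
      moreover have "8 / s n \<le> 8 * sqrt (real n)"
      proof -
        have "8 / s n = 8 * sqrt (real n) / ln (real n) powr \<beta>" unfolding s_def by simp
        also have "\<dots> \<le> 8 * sqrt (real n) / 1" using lp1 npos by (intro divide_left_mono) auto
        finally show ?thesis by simp
      qed
      ultimately show ?thesis using sq1 by linarith
    qed
    have Eb: "exp (- (real n * (s n)\<^sup>2) / 2) \<le> real n powr (-5/2)"
    proof -
      have "exp (- (real n * (s n)\<^sup>2) / 2) \<le> exp (ln (real n) * (-5/2))" using L n5 by simp
      also have "\<dots> = real n powr (-5/2)" using npos by (simp add: powr_def)
      finally show ?thesis .
    qed
    have "measure M (A n) \<le> C1 * (10 * sqrt (real n)) * real n powr (-5/2)"
    proof -
      have "C1 * real (K n) * exp (- (real n * (s n)\<^sup>2) / 2) \<le> C1 * (10 * sqrt (real n)) * real n powr (-5/2)"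
        using Kb Eb by (intro mult_mono mult_left_mono) (auto simp: C1_def)
      then show ?thesis using P by linarith
    qed
    also have "sqrt (real n) * real n powr (-5/2) = inverse (real n ^ 2)"
    proof -
      have "sqrt (real n) * real n powr (-5/2) = real n powr (1/2) * real n powr (-5/2)"
        using npos by (simp add: powr_half_sqrt)
      also have "\<dots> = real n powr (-2)" by (simp add: powr_add[symmetric])
      also have "\<dots> = inverse (real n ^ 2)" using npos by (simp add: powr_minus powr_realpow)
      finally show ?thesis .
    qed
    then have "C1 * (10 * sqrt (real n)) * real n powr (-5/2) = 10 * C1 * inverse (real n ^ 2)"
      by (simp add: algebra_simps)
    finally show ?thesis .
  qed
  have summ: "summable (\<lambda>n. measure M (A n))"
  proof (rule summable_comparison_test_ev)
    show "eventually (\<lambda>n. norm (measure M (A n)) \<le> 10 * C1 * inverse (real n ^ 2)) sequentially"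
      using asym[OF \<beta>] by eventually_elim (use key in auto)
    show "summable (\<lambda>n. 10 * C1 * inverse (real n ^ 2))"
      by (intro summable_mult inverse_power_summable) auto
  qed
  have BC: "AE \<omega> in M. eventually (\<lambda>n. \<omega> \<in> space M - A n) sequentially"
    by (rule borel_cantelli_AE1[OF Ameas _ summ]) (use W.emeasure_finite in \<open>auto simp: less_top[symmetric]\<close>)
  have ev: "eventually (\<lambda>n. 1 \<le> ln (real n) \<and> 0 \<le> j n) sequentially"
  proof -
    have "eventually (\<lambda>n. 0 \<le> j n) sequentially" using j_lim by (simp add: filterlim_at_top)
    then show ?thesis using asym[OF \<beta>] by eventually_elim auto
  qed
  show "AE \<omega> in M. \<exists>C::real. \<forall>\<^sub>F n in sequentially. \<forall>y::real.
              \<bar>wavelet_est \<phi> \<psi> (j n) n (\<lambda>i. Y i \<omega>) y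
                 - prob_space.expectation M (\<lambda>\<omega>'. wavelet_est \<phi> \<psi> (j n) n (\<lambda>i. Y i \<omega>') y)\<bar>
              \<le> C * (ln (real n) powr \<beta> * 2 powr (real_of_int (j n)) / sqrt (real n))"
    using BC
  proof (rule eventually_mono)
    fix \<omega> assume \<omega>: "eventually (\<lambda>n. \<omega> \<in> space M - A n) sequentially"
    show "\<exists>C::real. \<forall>\<^sub>F n in sequentially. \<forall>y::real.
              \<bar>wavelet_est \<phi> \<psi> (j n) n (\<lambda>i. Y i \<omega>) y
                 - prob_space.expectation M (\<lambda>\<omega>'. wavelet_est \<phi> \<psi> (j n) n (\<lambda>i. Y i \<omega>') y)\<bar>
              \<le> C * (ln (real n) powr \<beta> * 2 powr (real_of_int (j n)) / sqrt (real n))"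
    proof (intro exI)
      show "\<forall>\<^sub>F n in sequentially. \<forall>y::real.
              \<bar>wavelet_est \<phi> \<psi> (j n) n (\<lambda>i. Y i \<omega>) y
                 - prob_space.expectation M (\<lambda>\<omega>'. wavelet_est \<phi> \<psi> (j n) n (\<lambda>i. Y i \<omega>') y)\<bar>
              \<le> (real (2 * R + 1) * (Bp\<^sup>2 + 4 * Bs\<^sup>2)) * (ln (real n) powr \<beta> * 2 powr (real_of_int (j n)) / sqrt (real n))"
        using \<omega> ev
      proof eventually_elim
        case (elim n)
        have npos: "real n > 0" using elim(2) by (cases "n = 0") auto
        then have n: "n > 0" by simp
        have lp1: "1 \<le> ln (real n) powr \<beta>" using elim(2) \<beta> by (intro ge_one_powr_ge_zero) auto
        have sp: "s n > 0" unfolding s_def using lp1 npos by (intro divide_pos_pos) auto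
        have Ks: "8 / s n \<le> real (K n)" unfolding K_def by linarith
        have J: "j n = int (nat (j n))" using elim(2) by simp
        have om: "\<omega> \<in> space M" "\<omega> \<notin> A n" using elim(1) by auto
        show ?case
        proof
          fix y
          have "\<bar>wavelet_est \<phi> \<psi> (j n) n (\<lambda>i. Y i \<omega>) y - prob_space.expectation M (\<lambda>\<omega>'. wavelet_est \<phi> \<psi> (j n) n (\<lambda>i. Y i \<omega>') y)\<bar>
             \<le> real (2 * R + 1) * (Bp\<^sup>2 + 4 * Bs\<^sup>2) * s n * 2 ^ nat (j n)"
            by (rule W.good_bound[OF phis psis phim psim Bp(2) Bs(2) Bp(1) Bs(1) n Kp sp Ks J om(1)])
               (use om(2) in \<open>auto simp: A_def W.Bad_def\<close>)
          also have "real (2 * R + 1) * (Bp\<^sup>2 + 4 * Bs\<^sup>2) * s n * 2 ^ nat (j n) = real (2 * R + 1) * (Bp\<^sup>2 + 4 * Bs\<^sup>2) * (ln (real n) powr \<beta> * 2 powr (real_of_int (j n)) / sqrt (real n))"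
          proof -
            have "(2::real) powr (real_of_int (j n)) = 2 powr (real (nat (j n)))" using elim(2) by simp
            also have "\<dots> = 2 ^ nat (j n)" by (simp add: powr_realpow)
            finally show ?thesis unfolding s_def by simp
          qed
          finally show "\<bar>wavelet_est \<phi> \<psi> (j n) n (\<lambda>i. Y i \<omega>) y - prob_space.expectation M (\<lambda>\<omega>'. wavelet_est \<phi> \<psi> (j n) n (\<lambda>i. Y i \<omega>') y)\<bar>
             \<le> real (2 * R + 1) * (Bp\<^sup>2 + 4 * Bs\<^sup>2) * (ln (real n) powr \<beta> * 2 powr (real_of_int (j n)) / sqrt (real n))"
            by (simp add: mult.assoc)
        qed
      qed
    qed
  qed
qed

end
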